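(* For all integers $k,n\ge 1$, $$\zeta^*(k+1,\underbrace{1,\dots,1}_{n})=\sum_{t=1}^{n+1}\ \sum_{\substack{a_1+a_2+\dots+a_t=n+1-t\\ a_i\ge 0,\ i=1,\dots,t}}\zeta(a_t+k+1,\,a_1+1,\,a_2+1,\dots,a_{t-1}+1).$$
   Context: For positive integers $k_1,\dots,k_n$ with $k_1\ge 2$, $\zeta(k_1,\dots,k_n)=\sum_{m_1>\dots>m_n\ge 1}\prod_i m_i^{-k_i}$ and $\zeta^*(k_1,\dots,k_n)=\sum_{m_1\ge\dots\ge m_n\ge 1}\prod_i m_i^{-k_i}$. $\underbrace{1,\dots,1}_{n}$ denotes $n$ entries equal to $1$. For $t=1$ the summand is $\zeta(a_1+k+1)$. *)

theory Defs
  imports "HOL-Analysis.Analysis"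
begin

definition mzv :: "nat list \<Rightarrow> real" where
  "mzv ks = infsum (\<lambda>ms. \<Prod>i<length ks. 1 / (real (ms ! i)) ^ (ks ! i))
     {ms. length ms = length ks \<and> sorted_wrt (>) ms \<and> (\<forall>m\<in>set ms. 1 \<le> m)}"

definition mzsv :: "nat list \<Rightarrow> real" where
  "mzsv ks = infsum (\<lambda>ms. \<Prod>i<length ks. 1 / (real (ms ! i)) ^ (ks ! i))
     {ms. length ms = length ks \<and> sorted_wrt (\<ge>) ms \<and> (\<forall>m\<in>set ms. 1 \<le> m)}"

end

theory Submission
  imports Defs
begin

definition Tm :: "nat list \<Rightarrow> nat list \<Rightarrow> real" where
  "Tm ks ms = (\<Prod>i<length ks. 1 / (real (ms ! i)) ^ (ks ! i))"
definition Str :: "nat \<Rightarrow> nat list set" where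
  "Str t = {ms. length ms = t \<and> sorted_wrt (>) ms \<and> (\<forall>m\<in>set ms. 1 \<le> m)}"
definition Wk :: "nat \<Rightarrow> nat list set" where
  "Wk t = {ms. length ms = t \<and> sorted_wrt (\<ge>) ms \<and> (\<forall>m\<in>set ms. 1 \<le> m)}"

lemma mzv_eq: "mzv ks = infsum (Tm ks) (Str (length ks))"
  unfolding mzv_def Tm_def Str_def by simp
lemma mzsv_eq: "mzsv ks = infsum (Tm ks) (Wk (length ks))"
  unfolding mzsv_def Tm_def Wk_def by simp

lemma Tm_Cons: "Tm (c # ks) (m # ms) = 1 / real m ^ c * Tm ks ms"
  unfolding Tm_def by (simp add: prod.lessThan_Suc_shift del: prod.lessThan_Suc)

lemma Tm_Nil: "Tm [] ms = 1" unfolding Tm_def by simp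

lemma Tm_rep: "Tm (replicate (length w) 1) w = prod_list (map (\<lambda>x. 1 / real x) w)"
  by (induction w) (simp_all add: Tm_Nil Tm_Cons)

fun ex :: "nat list \<Rightarrow> nat list \<Rightarrow> nat list" where
  "ex (m # ms) (c # cs) = replicate c m @ ex ms cs"
| "ex _ _ = []"

lemma ex_set: "set (ex ms cs) \<subseteq> set ms"
  by (induction ms cs rule: ex.induct) auto

lemma ex_set_eq: "length ms = length cs \<Longrightarrow> \<forall>c\<in>set cs. 1 \<le> c \<Longrightarrow> set (ex ms cs) = set ms"
  by (induction ms cs rule: ex.induct) auto

lemma ex_len: "length ms = length cs \<Longrightarrow> length (ex ms cs) = sum_list cs"
  by (induction ms cs rule: ex.induct) auto

lemma ex_sorted: "sorted_wrt (>) ms \<Longrightarrow> sorted_wrt (\<ge>) (ex ms cs)"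
proof (induction ms cs rule: ex.induct)
  case (1 m ms c cs)
  have r: "sorted_wrt (\<ge>) (replicate c m)" by (induction c) auto
  have "\<forall>y\<in>set (ex ms cs). y \<le> m" using ex_set[of ms cs] 1 by fastforce
  then show ?case using 1 r
    by (auto simp: sorted_wrt_append)
qed auto

lemma ex_prod: "length ms = length cs \<Longrightarrow> prod_list (map (\<lambda>x. 1 / real x) (ex ms cs)) = Tm cs ms"
  by (induction ms cs rule: ex.induct) (auto simp: Tm_Cons Tm_Nil power_one_over)

lemma takeWhile_rep: fixes m :: nat shows "\<forall>y\<in>set ys. y < m \<Longrightarrow> takeWhile (\<lambda>x. x = m) (replicate c m @ ys) = replicate c m"
proof -
  assume "\<forall>y\<in>set ys. y < m"
  then have "takeWhile (\<lambda>x. x = m) ys = []"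
    by (cases ys) (auto simp: takeWhile_eq_Nil_iff)
  then show ?thesis by (induction c) auto
qed

lemma ex_inj:
  "length ms = length cs \<Longrightarrow> length ms' = length cs' \<Longrightarrow> \<forall>c\<in>set cs. 1 \<le> c \<Longrightarrow> \<forall>c\<in>set cs'. 1 \<le> c
   \<Longrightarrow> sorted_wrt (>) ms \<Longrightarrow> sorted_wrt (>) ms' \<Longrightarrow> ex ms cs = ex ms' cs' \<Longrightarrow> ms = ms' \<and> cs = cs'"
proof (induction ms arbitrary: cs ms' cs')
  case Nil
  then have "sum_list cs' = 0" using ex_len[of ms' cs'] by simp
  then show ?case using Nil by (cases cs') auto
next
  case (Cons m ms)
  obtain c cs0 where cs: "cs = c # cs0" using Cons.prems by (cases cs) auto
  have c1: "c \<ge> 1" using Cons.prems cs by auto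
  obtain m' ms1 c' cs1 where ms': "ms' = m' # ms1" and cs': "cs' = c' # cs1"
    using Cons.prems cs c1 by (cases ms'; cases cs') auto
  have c1': "c' \<ge> 1" using Cons.prems cs' by auto
  have eq: "replicate c m @ ex ms cs0 = replicate c' m' @ ex ms1 cs1"
    using Cons.prems cs ms' cs' by simp
  have mm: "m = m'" using eq c1 c1' by (cases c; cases c') auto
  have lt1: "\<forall>y\<in>set (ex ms cs0). y < m" using ex_set[of ms cs0] Cons.prems by auto
  have lt2: "\<forall>y\<in>set (ex ms1 cs1). y < m" using ex_set[of ms1 cs1] Cons.prems ms' mm by auto
  have "replicate c m = replicate c' m"
    using arg_cong[OF eq, of "takeWhile (\<lambda>x. x = m)"] takeWhile_rep[OF lt1] takeWhile_rep[OF lt2] mm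
    by simp
  then have cc: "c = c'" by simp
  then have "ex ms cs0 = ex ms1 cs1" using eq mm by simp
  then have "ms = ms1 \<and> cs0 = cs1" using Cons.IH[of cs0 ms1 cs1] Cons.prems cs ms' cs' by auto
  then show ?case using cs ms' cs' mm cc by simp
qed

lemma ex_surj:
  "sorted_wrt (\<ge>) w \<Longrightarrow> \<exists>ms cs. length ms = length cs \<and> (\<forall>c\<in>set cs. 1 \<le> c) \<and> sorted_wrt (>) ms \<and> w = ex ms cs"
proof (induction w)
  case Nil
  then show ?case by (intro exI[of _ "[]"]) auto
next
  case (Cons x rest)
  then obtain ms cs where h: "length ms = length cs" "\<forall>c\<in>set cs. 1 \<le> c" "sorted_wrt (>) ms" "rest = ex ms cs"
    by auto
  show ?case
  proof (cases ms)
    case Nil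
    then show ?thesis using h by (intro exI[of _ "[x]"] exI[of _ "[1]"]) auto
  next
    case (Cons m ms0)
    then obtain c cs0 where cs: "cs = c # cs0" using h by (cases cs) auto
    have c1: "c \<ge> 1" using h cs by auto
    have "m \<in> set rest" using h Cons cs c1 by (cases c) auto
    then have xm: "x \<ge> m" using Cons.prems by auto
    show ?thesis
    proof (cases "x = m")
      case True
      then show ?thesis using h Cons cs c1
        by (intro exI[of _ ms] exI[of _ "(c+1) # cs0"]) auto
    next
      case False
      then show ?thesis using h Cons cs c1 xm
        by (intro exI[of _ "x # ms"] exI[of _ "1 # cs"]) auto
    qed
  qed
qed


lemma term_ex:
  assumes "length ms0 = length cs0" "c \<ge> 1"
  shows "Tm ((k+1) # replicate (sum_list (c # cs0) - 1) 1) (ex (m # ms0) (c # cs0)) = Tm ((k+c) # cs0) (m # ms0)"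
proof -
  define tl0 where "tl0 = replicate (c-1) m @ ex ms0 cs0"
  have e: "ex (m # ms0) (c # cs0) = m # tl0" using assms(2) unfolding tl0_def by (cases c) auto
  have l: "sum_list (c # cs0) - 1 = length tl0" using assms ex_len[of ms0 cs0] unfolding tl0_def by simp
  have "Tm ((k+1) # replicate (sum_list (c # cs0) - 1) 1) (ex (m # ms0) (c # cs0))
     = 1 / real m ^ (k+1) * ((1 / real m) ^ (c - 1) * Tm cs0 ms0)"
    unfolding e l Tm_Cons Tm_rep unfolding tl0_def using ex_prod[OF assms(1)] by simp
  also have "\<dots> = 1 / real m ^ (k + c) * Tm cs0 ms0"
  proof -
    obtain d where "c = Suc d" using assms(2) by (cases c) auto
    then show ?thesis by (simp add: power_one_over power_add)
  qed
  finally show ?thesis by (simp add: Tm_Cons)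
qed

definition Cmp :: "nat \<Rightarrow> nat list set" where
  "Cmp N = {cs. (\<forall>c\<in>set cs. 1 \<le> c) \<and> sum_list cs = N}"

lemma len_le_sum: "\<forall>c\<in>set cs. 1 \<le> c \<Longrightarrow> length cs \<le> sum_list (cs :: nat list)"
  by (induction cs) auto

lemma finite_Cmp: "finite (Cmp N)"
proof -
  have "Cmp N \<subseteq> {xs. set xs \<subseteq> {0..N} \<and> length xs \<le> N}"
    unfolding Cmp_def using len_le_sum member_le_sum_list by fastforce
  then show ?thesis using finite_lists_length_le[of "{0..N}" N] finite_subset by blast
qed

lemma Wk_decomp: "Wk N = (\<Union>cs\<in>Cmp N. (\<lambda>ms. ex ms cs) ` Str (length cs))"
proof
  show "Wk N \<subseteq> (\<Union>cs\<in>Cmp N. (\<lambda>ms. ex ms cs) ` Str (length cs))"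
  proof
    fix w assume w: "w \<in> Wk N"
    then obtain ms cs where h: "length ms = length cs" "\<forall>c\<in>set cs. 1 \<le> c" "sorted_wrt (>) ms" "w = ex ms cs"
      using ex_surj unfolding Wk_def by blast
    have "cs \<in> Cmp N" using h w ex_len[of ms cs] unfolding Cmp_def Wk_def by auto
    moreover have "ms \<in> Str (length cs)" using h w ex_set_eq[of ms cs] unfolding Str_def Wk_def by auto
    ultimately show "w \<in> (\<Union>cs\<in>Cmp N. (\<lambda>ms. ex ms cs) ` Str (length cs))" using h by blast
  qed
next
  show "(\<Union>cs\<in>Cmp N. (\<lambda>ms. ex ms cs) ` Str (length cs)) \<subseteq> Wk N"
    unfolding Cmp_def Str_def Wk_def using ex_len ex_set_eq ex_sorted by fastforce
qed

lemma ex_inj_on: "cs \<in> Cmp N \<Longrightarrow> inj_on (\<lambda>ms. ex ms cs) (Str (length cs))"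
  unfolding inj_on_def Cmp_def Str_def using ex_inj by blast

lemma ex_disj: "cs \<in> Cmp N \<Longrightarrow> cs' \<in> Cmp N \<Longrightarrow> cs \<noteq> cs' \<Longrightarrow>
   (\<lambda>ms. ex ms cs) ` Str (length cs) \<inter> (\<lambda>ms. ex ms cs') ` Str (length cs') = {}"
  unfolding Cmp_def Str_def using ex_inj by blast


lemma sum_minus1: "\<forall>c\<in>set cs. 1 \<le> c \<Longrightarrow> sum_list (map (\<lambda>x. x - 1) cs) = sum_list (cs :: nat list) - length cs"
proof (induction cs)
  case (Cons c cs)
  then show ?case using len_le_sum[of cs] by auto
qed simp

lemma rhs_reindex:
  "(\<Sum>t = 1..n + 1. \<Sum>a \<in> {a :: nat list. length a = t \<and> sum_list a = n + 1 - t}.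
      h ((a ! (t - 1) + 1) # map (\<lambda>x. x + 1) (take (t - 1) a))) = (\<Sum>cs\<in>Cmp (n+1). h cs)"
proof -
  define A where "A t = {a :: nat list. length a = t \<and> sum_list a = n + 1 - t}" for t
  have finA: "finite (A t)" for t
  proof -
    have "A t \<subseteq> {xs. set xs \<subseteq> {0..n+1} \<and> length xs = t}"
      unfolding A_def using member_le_sum_list by fastforce
    then show ?thesis using finite_lists_length_eq[of "{0..n+1}" t] finite_subset by blast
  qed
  define j where "j = (\<lambda>(t::nat, a::nat list). (a ! (t - 1) + 1) # map (\<lambda>x. x + 1) (take (t - 1) a))"
  define i where "i = (\<lambda>cs::nat list. (length cs, map (\<lambda>x. x - 1) (tl cs @ [hd cs])))"
  have "(\<Sum>t = 1..n + 1. \<Sum>a \<in> A t. h ((a ! (t - 1) + 1) # map (\<lambda>x. x + 1) (take (t - 1) a)))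
      = (\<Sum>p\<in>Sigma {1..n+1} A. h (j p))"
    unfolding j_def using finA by (subst sum.Sigma) (auto simp: split_def)
  also have "\<dots> = (\<Sum>cs\<in>Cmp (n+1). h cs)"
  proof (rule sum.reindex_bij_witness[where i = i and j = j])
    fix p assume p: "p \<in> Sigma {1..n+1} A"
    then obtain t a where pa: "p = (t, a)" "t \<in> {1..n+1}" "length a = t" "sum_list a = n + 1 - t"
      unfolding A_def by auto
    then obtain b x where bx: "a = b @ [x]" by (cases a rule: rev_exhaust) auto
    have lb: "length b = t - 1" using pa bx by simp
    have jp: "j p = (x + 1) # map (\<lambda>x. x + 1) b" unfolding j_def pa bx using lb by (simp add: nth_append)
    have "i (j p) = (t, b @ [x])" unfolding jp i_def using lb pa by (simp add: comp_def)
    then show "i (j p) = p" using pa bx by simp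
    have "sum_list (map Suc b) = sum_list b + length b" by (induction b) auto
    then show "j p \<in> Cmp (n+1)" unfolding jp Cmp_def using pa bx lb by auto
  next
    fix cs assume cs: "cs \<in> Cmp (n+1)"
    then obtain c cs0 where cc: "cs = c # cs0" unfolding Cmp_def by (cases cs) auto
    have pos: "\<forall>c\<in>set (cs0 @ [c]). 1 \<le> c" using cs cc unfolding Cmp_def by auto
    show "j (i cs) = cs" unfolding i_def j_def cc using pos by (auto simp: nth_append comp_def intro!: map_idI)
    have "length cs \<le> n + 1" using cs len_le_sum unfolding Cmp_def by fastforce
    moreover have "sum_list (map (\<lambda>x. x - 1) (cs0 @ [c])) = n + 1 - length cs"
      using sum_minus1[OF pos] cs cc unfolding Cmp_def by (simp; linarith)
    ultimately show "i cs \<in> Sigma {1..n+1} A" unfolding i_def A_def cc by simp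
  qed simp
  finally show ?thesis unfolding A_def .
qed

lemma harm_le: "M \<ge> 1 \<Longrightarrow> harm M \<le> 1 + ln (real M)"
  using euler_mascheroni_sequence_decreasing[of 1 M] by (simp add: harm_expand)

lemma beta_bound:
  fixes n k M :: nat
  assumes "n \<ge> 1" "k \<ge> 1" "M \<ge> 1"
  shows "1 / real M ^ (k+1) * harm M ^ n \<le> (1 + 2 * real n) ^ n * real M powr (-3/2)"
proof -
  define a where "a = 1 / (2 * real n)"
  have a0: "a > 0" using assms unfolding a_def by simp
  have M1: "real M \<ge> 1" using assms by simp
  have pa: "real M powr a \<ge> 1" using M1 a0 by (simp add: ge_one_powr_ge_zero)
  have "harm M \<le> 1 + real M powr a / a" using harm_le[OF assms(3)] ln_powr_bound[OF M1 a0] by simp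
  also have "\<dots> = 1 + 2 * real n * real M powr a" unfolding a_def by simp
  also have "\<dots> \<le> (1 + 2 * real n) * real M powr a" using pa by (simp add: algebra_simps)
  finally have h: "harm M \<le> (1 + 2 * real n) * real M powr a" .
  have h0: "0 \<le> (harm M :: real)" by (simp add: harm_nonneg)
  have "harm M ^ n \<le> ((1 + 2 * real n) * real M powr a) ^ n" using power_mono[OF h h0] .
  also have "\<dots> = (1 + 2 * real n) ^ n * real M powr (1/2)"
  proof -
    have "(real M powr a) ^ n = real M powr (a * real n)"
      using M1 by (simp add: powr_realpow[symmetric] powr_powr)
    also have "a * real n = 1/2" unfolding a_def using assms by simp
    finally show ?thesis by (simp add: power_mult_distrib)
  qed
  finally have hn: "harm M ^ n \<le> (1 + 2 * real n) ^ n * real M powr (1/2)" .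
  have "1 / real M ^ (k+1) \<le> 1 / real M ^ 2"
    using M1 assms by (intro divide_left_mono power_increasing) auto
  also have "\<dots> = real M powr (-2)" using M1 by (simp add: powr_minus powr_realpow divide_inverse)
  finally have i: "1 / real M ^ (k+1) \<le> real M powr (-2)" .
  have "1 / real M ^ (k+1) * harm M ^ n \<le> real M powr (-2) * ((1 + 2 * real n) ^ n * real M powr (1/2))"
    using i hn by (intro mult_mono) (auto simp: h0)
  also have "\<dots> = (1 + 2 * real n) ^ n * (real M powr (-2) * real M powr (1/2))" by simp
  also have "real M powr (-2) * real M powr (1/2) = real M powr (-3/2)"
    using M1 by (simp add: powr_add[symmetric])
  finally show ?thesis by simp
qed

lemma beta_summable: "summable (\<lambda>M::nat. (1 + 2 * real n) ^ n * real M powr (-3/2))"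
  by (intro summable_mult) (simp add: summable_real_powr_iff)

lemma lists_sum:
  assumes "finite A"
  shows "(\<Sum>xs\<in>{xs. length xs = n \<and> set xs \<subseteq> A}. Tm (replicate n 1) xs) = (\<Sum>x\<in>A. 1 / real x) ^ n"
proof (induction n)
  case 0
  have "{xs. length xs = 0 \<and> set xs \<subseteq> A} = {[]}" by auto
  then show ?case by (simp add: Tm_Nil)
next
  case (Suc n)
  define L where "L = {xs. length xs = n \<and> set xs \<subseteq> A}"
  have eq: "{xs. length xs = Suc n \<and> set xs \<subseteq> A} = (\<lambda>(x, xs). x # xs) ` (A \<times> L)"
    unfolding L_def by (auto simp: length_Suc_conv image_iff)
  have inj: "inj_on (\<lambda>(x, xs). x # xs) (A \<times> L)" by (auto simp: inj_on_def)
  have finL: "finite L" unfolding L_def using finite_lists_length_eq[OF assms, of n] by (simp add: conj_commute)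
  have "(\<Sum>xs\<in>{xs. length xs = Suc n \<and> set xs \<subseteq> A}. Tm (replicate (Suc n) 1) xs)
      = (\<Sum>p\<in>A \<times> L. Tm (replicate (Suc n) 1) (fst p # snd p))"
    unfolding eq by (subst sum.reindex[OF inj]) (simp add: split_def)
  also have "\<dots> = (\<Sum>x\<in>A. \<Sum>xs\<in>L. 1 / real x * Tm (replicate n 1) xs)"
    by (simp add: sum.cartesian_product Tm_Cons split_def)
  also have "\<dots> = (\<Sum>x\<in>A. 1 / real x) * (\<Sum>xs\<in>L. Tm (replicate n 1) xs)"
    by (simp add: sum_product)
  also have "\<dots> = (\<Sum>x\<in>A. 1 / real x) ^ Suc n" using Suc unfolding L_def by simp
  finally show ?case .
qed

lemma Tm_nonneg: "Tm ks ms \<ge> 0" unfolding Tm_def by (intro prod_nonneg) auto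

lemma zstar_summable:
  assumes "n \<ge> 1" "k \<ge> 1"
  shows "Tm ((k+1) # replicate n 1) summable_on Wk (n+1)"
proof (rule nonneg_bdd_above_summable_on)
  define F where "F = Tm ((k+1) # replicate n 1)"
  define \<beta> where "\<beta> = (\<lambda>M::nat. (1 + 2 * real n) ^ n * real M powr (-3/2))"
  have bs: "summable \<beta>" unfolding \<beta>_def by (rule beta_summable)
  have b0: "\<beta> M \<ge> 0" for M unfolding \<beta>_def by simp
  define L where "L M = {xs :: nat list. length xs = n \<and> set xs \<subseteq> {1..M}}" for M :: nat
  define U where "U N = (\<lambda>(M, xs). M # xs) ` Sigma {1..N} L" for N
  have finL: "finite (L M)" for M unfolding L_def using finite_lists_length_eq[of "{1..M}" n] by (simp add: conj_commute)
  have finU: "finite (U N)" for N unfolding U_def using finL by auto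
  have injU: "inj_on (\<lambda>(M, xs). M # xs) (Sigma {1..N} L)" for N by (auto simp: inj_on_def)
  have sumU: "sum F (U N) \<le> suminf \<beta>" for N
  proof -
    have "sum F (U N) = (\<Sum>M\<in>{1..N}. \<Sum>xs\<in>L M. F (M # xs))"
      unfolding U_def by (subst sum.reindex[OF injU]) (simp add: split_def sum.Sigma[OF _ ] finL)
    also have "\<dots> = (\<Sum>M\<in>{1..N}. 1 / real M ^ (k+1) * harm M ^ n)"
    proof (rule sum.cong[OF refl])
      fix M assume "M \<in> {1..N}"
      have "(\<Sum>xs\<in>L M. F (M # xs)) = 1 / real M ^ (k+1) * (\<Sum>xs\<in>L M. Tm (replicate n 1) xs)"
        unfolding F_def by (simp add: Tm_Cons sum_distrib_left)
      also have "(\<Sum>xs\<in>L M. Tm (replicate n 1) xs) = harm M ^ n"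
        unfolding L_def lists_sum[OF finite_atLeastAtMost] harm_def by (simp add: divide_inverse)
      finally show "(\<Sum>xs\<in>L M. F (M # xs)) = 1 / real M ^ (k+1) * harm M ^ n" .
    qed
    also have "\<dots> \<le> (\<Sum>M\<in>{1..N}. \<beta> M)"
      unfolding \<beta>_def using beta_bound assms by (intro sum_mono) auto
    also have "\<dots> \<le> suminf \<beta>" using bs b0 by (intro sum_le_suminf) auto
    finally show ?thesis .
  qed
  show "bdd_above (sum F ` {G. G \<subseteq> Wk (n+1) \<and> finite G})"
  proof (rule bdd_aboveI2)
    fix G assume G: "G \<in> {G. G \<subseteq> Wk (n+1) \<and> finite G}"
    define N where "N = Max (hd ` G)"
    have "G \<subseteq> U N"
    proof
      fix w assume w: "w \<in> G"
      then have wW: "w \<in> Wk (n+1)" using G by auto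
      then obtain M xs where wM: "w = M # xs" unfolding Wk_def by (cases w) auto
      have "M \<le> N" unfolding N_def using G w wM by (intro Max_ge) force+
      moreover have "M \<ge> 1" "length xs = n" "set xs \<subseteq> {1..M}" using wW wM unfolding Wk_def by auto
      ultimately show "w \<in> U N" unfolding U_def L_def using wM by force
    qed
    then have "sum F G \<le> sum F (U N)"
      using finU by (intro sum_mono2) (auto simp: F_def Tm_nonneg)
    also have "\<dots> \<le> suminf \<beta>" by (rule sumU)
    finally show "sum F G \<le> suminf \<beta>" .
  qed
qed (rule Tm_nonneg)


theorem proposition2p3:
  fixes k n :: nat
  assumes "k \<ge> 1" and "n \<ge> 1"
  shows "mzsv ((k + 1) # replicate n 1) =
    (\<Sum>t = 1..n + 1. \<Sum>a \<in> {a :: nat list. length a = t \<and> sum_list a = n + 1 - t}.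
        mzv ((a ! (t - 1) + k + 1) # map (\<lambda>x. x + 1) (take (t - 1) a)))"
proof -
  define F where "F = Tm ((k+1) # replicate n 1)"
  define E where "E cs = (\<lambda>ms. ex ms cs) ` Str (length cs)" for cs
  define h where "h cs = mzv ((k + hd cs) # tl cs)" for cs
  have summ: "F summable_on Wk (n+1)" unfolding F_def using zstar_summable assms by simp
  have "mzsv ((k + 1) # replicate n 1) = infsum F (Wk (n+1))"
    unfolding mzsv_eq F_def by simp
  also have "\<dots> = infsum F (\<Union>cs\<in>Cmp (n+1). E cs)" unfolding E_def Wk_decomp ..
  also have "\<dots> = (\<Sum>cs\<in>Cmp (n+1). infsum F (E cs))"
  proof (rule sum_infsum[symmetric])
    show "finite (Cmp (n+1))" by (rule finite_Cmp)
    fix cs assume "cs \<in> Cmp (n+1)"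
    then have "E cs \<subseteq> Wk (n+1)" unfolding E_def Wk_decomp by blast
    then show "F summable_on E cs" using summ summable_on_subset_banach by blast
  next
    fix cs cs' assume "cs \<in> Cmp (n+1)" "cs' \<in> Cmp (n+1)" "cs \<noteq> cs'"
    then show "E cs \<inter> E cs' = {}" unfolding E_def by (rule ex_disj)
  qed
  also have "\<dots> = (\<Sum>cs\<in>Cmp (n+1). h cs)"
  proof (rule sum.cong[OF refl])
    fix cs assume cs: "cs \<in> Cmp (n+1)"
    then obtain c cs0 where cc: "cs = c # cs0" unfolding Cmp_def by (cases cs) auto
    have c1: "c \<ge> 1" and sl: "sum_list cs = n + 1" using cs cc unfolding Cmp_def by auto
    have "infsum F (E cs) = infsum (F \<circ> (\<lambda>ms. ex ms cs)) (Str (length cs))"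
      unfolding E_def by (rule infsum_reindex[OF ex_inj_on[OF cs]])
    also have "\<dots> = infsum (Tm ((k + hd cs) # tl cs)) (Str (length cs))"
    proof (rule infsum_cong)
      fix ms assume ms: "ms \<in> Str (length cs)"
      then obtain m ms0 where mm: "ms = m # ms0" unfolding Str_def cc by (cases ms) auto
      have l: "length ms0 = length cs0" using ms mm cc unfolding Str_def by auto
      have "n = sum_list (c # cs0) - 1" using sl cc by simp
      then show "(F \<circ> (\<lambda>ms. ex ms cs)) ms = Tm ((k + hd cs) # tl cs) ms"
        unfolding F_def using term_ex[OF l c1, of k m] mm cc by simp
    qed
    also have "\<dots> = h cs" unfolding h_def mzv_eq cc by simp
    finally show "infsum F (E cs) = h cs" .
  qed
  also have "\<dots> = (\<Sum>t = 1..n + 1. \<Sum>a \<in> {a :: nat list. length a = t \<and> sum_list a = n + 1 - t}.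
      h ((a ! (t - 1) + 1) # map (\<lambda>x. x + 1) (take (t - 1) a)))"
    by (rule rhs_reindex[symmetric])
  also have "\<dots> = (\<Sum>t = 1..n + 1. \<Sum>a \<in> {a :: nat list. length a = t \<and> sum_list a = n + 1 - t}.
        mzv ((a ! (t - 1) + k + 1) # map (\<lambda>x. x + 1) (take (t - 1) a)))"
    unfolding h_def by (simp add: add_ac)
  finally show ?thesis .
qed

end
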